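(* No randomized mechanism that is universally truthful without money and with verification for CAs with known $2$-minded bidders has expected approximation ratio strictly less than $5/4$. This holds even restricted to instances with $n=2$ bidders and $m=2$ goods.
   Context: Combinatorial auction with a set $\mathsf U$ of $m$ goods (single copy each) and $n$ bidders; bidder $i$ has a public collection $\mathcal S_i$ of $k$ nonempty subsets of $\mathsf U$ (known bidders; here $k=2$) and a private valuation $v_i:\mathcal S_i\to\mathbb R_{\ge0}$, extended by $v_i(T)=\max\{v_i(S'):S'\in\mathcal S_i,S'\subseteq T\}$ ($0$ if none). A declaration is any valuation $b_i:\mathcal S_i\to\mathbb R_{\ge0}$. A deterministic mechanism maps declarations to pairwise disjoint sets with $A_i(\mathbf b)\in\mathcal S_i\cup\{\emptyset\}$. Verification: bidder $i$ with true valuation $v_i$ facing $\mathbf b_{-i}$ may declare $b_i$ only if $b_i(A_i(b_i,\mathbf b_{-i}))\le v_i(A_i(b_i,\mathbf b_{-i}))$. A deterministic mechanism is truthful without money and with verification if for all $i$, $\mathbf b_{-i}$, true $v_i$ and permitted $b_i$, $v_i(A_i(v_i,\mathbf b_{-i}))\ge v_i(A_i(b_i,\mathbf b_{-i}))$; a randomized mechanism is universally truthful if it is a probability distribution over such deterministic mechanisms. Expected approximation ratio $\alpha$: on every truthful input, the expected social welfare is at least $\mathrm{OPT}/\alpha$, where $\mathrm{OPT}$ is the maximum welfare of a feasible allocation. *)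

theory Defs
  imports "HOL-Probability.Probability"
begin

text \<open>Bidders are the elements of a finite type 'b, goods the elements of a finite
type 'g (so U = UNIV). A collection profile S assigns to each bidder its public
collection of desired bundles; a declaration profile b assigns to each bidder a
valuation on its collection (represented as a function on all bundles that is 0
outside the collection).\<close>

definition valid_coll :: "('b::finite \<Rightarrow> 'g::finite set set) \<Rightarrow> bool" where
  "valid_coll S \<longleftrightarrow> (\<forall>i. card (S i) = 2 \<and> {} \<notin> S i)"

definition valid_decl :: "('b::finite \<Rightarrow> 'g::finite set set) \<Rightarrow> ('b \<Rightarrow> 'g set \<Rightarrow> real) \<Rightarrow> bool" where
  "valid_decl S b \<longleftrightarrow> (\<forall>i T. 0 \<le> b i T \<and> (T \<notin> S i \<longrightarrow> b i T = 0))"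

definition ext_val :: "('b::finite \<Rightarrow> 'g::finite set set) \<Rightarrow> ('b \<Rightarrow> 'g set \<Rightarrow> real) \<Rightarrow> 'b \<Rightarrow> 'g set \<Rightarrow> real" where
  "ext_val S b i T = Max (insert 0 {b i S' | S'. S' \<in> S i \<and> S' \<subseteq> T})"

definition feasible :: "('b::finite \<Rightarrow> 'g::finite set set) \<Rightarrow> ('b \<Rightarrow> 'g set) \<Rightarrow> bool" where
  "feasible S A \<longleftrightarrow> (\<forall>i. A i \<in> S i \<union> {{}}) \<and> (\<forall>i j. i \<noteq> j \<longrightarrow> A i \<inter> A j = {})"

definition welfare :: "('b::finite \<Rightarrow> 'g::finite set set) \<Rightarrow> ('b \<Rightarrow> 'g set \<Rightarrow> real) \<Rightarrow> ('b \<Rightarrow> 'g set) \<Rightarrow> real" where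
  "welfare S v A = (\<Sum>i\<in>UNIV. ext_val S v i (A i))"

definition opt :: "('b::finite \<Rightarrow> 'g::finite set set) \<Rightarrow> ('b \<Rightarrow> 'g set \<Rightarrow> real) \<Rightarrow> real" where
  "opt S v = Max {welfare S v A | A. feasible S A}"

type_synonym ('b, 'g) mech = "('b \<Rightarrow> 'g set set) \<Rightarrow> ('b \<Rightarrow> 'g set \<Rightarrow> real) \<Rightarrow> 'b \<Rightarrow> 'g set"

definition det_mech :: "('b::finite, 'g::finite) mech \<Rightarrow> bool" where
  "det_mech M \<longleftrightarrow> (\<forall>S b. valid_coll S \<and> valid_decl S b \<longrightarrow> feasible S (M S b))"

text \<open>Truthful without money and with verification: a bidder with true valuation vi,
facing b_{-i}, may declare bi only if bi(A_i) <= vi(A_i) for the resulting bundle;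
every permitted declaration yields no more true value than truth-telling.\<close>
definition truthful_verif :: "('b::finite, 'g::finite) mech \<Rightarrow> bool" where
  "truthful_verif M \<longleftrightarrow> det_mech M \<and>
     (\<forall>S b i vi bi. valid_coll S \<longrightarrow> valid_decl S (b(i := vi)) \<longrightarrow> valid_decl S (b(i := bi)) \<longrightarrow>
        ext_val S (b(i := bi)) i (M S (b(i := bi)) i) \<le> ext_val S (b(i := vi)) i (M S (b(i := bi)) i) \<longrightarrow>
        ext_val S (b(i := vi)) i (M S (b(i := bi)) i) \<le> ext_val S (b(i := vi)) i (M S (b(i := vi)) i))"

end

theory Submission
  imports Defs
begin

lemma ext_vals:
  assumes "S i = {{g1},{g2}}" "g1 \<noteq> g2"
  shows "ext_val S v i {} = 0" "ext_val S v i {g1} = max 0 (v i {g1})"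
    "ext_val S v i {g2} = max 0 (v i {g2})"
proof -
  have "{v i S' |S'. S' \<in> S i \<and> S' \<subseteq> {}} = {}" using assms by auto
  then show "ext_val S v i {} = 0" unfolding ext_val_def by simp
  have "{v i S' |S'. S' \<in> S i \<and> S' \<subseteq> {g1}} = {v i {g1}}" using assms by auto
  then show "ext_val S v i {g1} = max 0 (v i {g1})" unfolding ext_val_def by simp
  have "{v i S' |S'. S' \<in> S i \<and> S' \<subseteq> {g2}} = {v i {g2}}" using assms by auto
  then show "ext_val S v i {g2} = max 0 (v i {g2})" unfolding ext_val_def by simp
qed

theorem theorem12:
  fixes P :: "('b::finite, 'g::finite) mech measure" and \<alpha> :: real
  assumes "CARD('b) = 2" and "CARD('g) = 2"
    and "prob_space P"
    and "\<forall>M\<in>space P. truthful_verif M"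
    and "\<forall>S v. valid_coll S \<and> valid_decl S v \<longrightarrow> (\<lambda>M. welfare S v (M S v)) \<in> borel_measurable P"
    and "\<alpha> > 0"
    and "\<forall>S v. valid_coll S \<and> valid_decl S v \<longrightarrow> opt S v / \<alpha> \<le> (\<integral>M. welfare S v (M S v) \<partial>P)"
  shows "\<alpha> \<ge> 5 / 4"
proof -
  obtain b1 b2 :: 'b where bb: "b1 \<noteq> b2" "UNIV = {b1, b2}"
    using assms(1) card_2_iff by metis
  obtain g1 g2 :: 'g where gg: "g1 \<noteq> g2" "UNIV = {g1, g2}"
    using assms(2) card_2_iff by metis
  have ne: "{g1} \<noteq> {g2}" "{g2} \<noteq> {g1}" "{g1} \<noteq> {}" "{g2} \<noteq> {}" using gg by auto
  define S where "S = (\<lambda>i::'b. {{g1},{g2}})"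
  define vX :: "'g set \<Rightarrow> real" where "vX = (\<lambda>T. if T = {g1} then 5 else 0)"
  define vY :: "'g set \<Rightarrow> real" where "vY = (\<lambda>T. if T = {g1} then 5 else if T = {g2} then 4 else 0)"
  define vQ :: "'g set \<Rightarrow> real" where "vQ = (\<lambda>T. if T = {g1} then 4 else 0)"
  define YP where "YP = (\<lambda>i::'b. vY)"
  define XP where "XP = YP(b1 := vX)"
  define YQ where "YQ = YP(b2 := vQ)"
  have Si: "\<And>i. S i = {{g1},{g2}}" unfolding S_def by simp
  have vc: "valid_coll S" unfolding valid_coll_def S_def using ne by auto
  have vdXP: "valid_decl S XP" unfolding valid_decl_def XP_def YP_def S_def vX_def vY_def by auto
  have vdYQ: "valid_decl S YQ" unfolding valid_decl_def YQ_def YP_def S_def vQ_def vY_def by auto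
  have vdYP: "valid_decl S YP" unfolding valid_decl_def YP_def S_def vY_def by auto
  have YP1: "YP(b1 := vY) = YP" unfolding YP_def by auto
  have YP2: "YP(b2 := vY) = YP" unfolding YP_def by auto
  have XPv: "XP b1 = vX" "XP b2 = vY" unfolding XP_def YP_def using bb by auto
  have YQv: "YQ b1 = vY" "YQ b2 = vQ" unfolding YQ_def YP_def using bb by auto
  have YPv: "YP b1 = vY" "YP b2 = vY" unfolding YP_def by auto
  have vals: "vX {g1} = 5" "vX {g2} = 0" "vY {g1} = 5" "vY {g2} = 4" "vQ {g1} = 4" "vQ {g2} = 0"
    unfolding vX_def vY_def vQ_def using ne by auto
  have ev: "\<And>v i. ext_val S v i {} = 0" "\<And>v i. ext_val S v i {g1} = max 0 (v i {g1})"
    "\<And>v i. ext_val S v i {g2} = max 0 (v i {g2})" using ext_vals[of S _ g1 g2] Si gg(1) by auto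
  have wel: "\<And>v A. welfare S v A = ext_val S v b1 (A b1) + ext_val S v b2 (A b2)"
    unfolding welfare_def bb(2) using bb(1) by simp
  have alloc: "\<And>A i. feasible S A \<Longrightarrow> A i = {} \<or> A i = {g1} \<or> A i = {g2}"
    unfolding feasible_def S_def by auto
  have disj: "\<And>A. feasible S A \<Longrightarrow> A b1 \<inter> A b2 = {}"
    unfolding feasible_def using bb by auto
  have key: "3 * welfare S XP (M S XP) + 4 * welfare S YQ (M S YQ) \<le> 47
     \<and> 0 \<le> welfare S XP (M S XP) \<and> welfare S XP (M S XP) \<le> 10
     \<and> 0 \<le> welfare S YQ (M S YQ) \<and> welfare S YQ (M S YQ) \<le> 10" if "M \<in> space P" for M
  proof -
    have tv: "truthful_verif M" using assms(4) that by auto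
    then have dm: "det_mech M" unfolding truthful_verif_def by auto
    have tr: "\<And>b i vi bi. valid_decl S (b(i := vi)) \<Longrightarrow> valid_decl S (b(i := bi)) \<Longrightarrow>
        ext_val S (b(i := bi)) i (M S (b(i := bi)) i) \<le> ext_val S (b(i := vi)) i (M S (b(i := bi)) i) \<Longrightarrow>
        ext_val S (b(i := vi)) i (M S (b(i := bi)) i) \<le> ext_val S (b(i := vi)) i (M S (b(i := vi)) i)"
      using tv vc unfolding truthful_verif_def by blast
    define A where "A = M S XP"
    define B where "B = M S YQ"
    define C where "C = M S YP"
    have fA: "feasible S A" using dm vc vdXP unfolding A_def det_mech_def by auto
    have fB: "feasible S B" using dm vc vdYQ unfolding B_def det_mech_def by auto
    have fC: "feasible S C" using dm vc vdYP unfolding C_def det_mech_def by auto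
    have notopt: "\<not> (A b1 = {g1} \<and> A b2 = {g2} \<and> B b1 = {g2} \<and> B b2 = {g1})"
    proof
      assume h: "A b1 = {g1} \<and> A b2 = {g2} \<and> B b1 = {g2} \<and> B b2 = {g1}"
      have "ext_val S YP b1 (A b1) \<le> ext_val S YP b1 (C b1)"
        using tr[of YP b1 vY vX] vdYP vdXP h
        unfolding YP1 A_def C_def XP_def[symmetric]
        by (simp add: ev XPv YPv vals)
      then have c1: "C b1 = {g1}" using alloc[OF fC, of b1] h
        by (auto simp: ev YPv vals ne)
      have "ext_val S YP b2 (B b2) \<le> ext_val S YP b2 (C b2)"
        using tr[of YP b2 vY vQ] vdYP vdYQ h
        unfolding YP2 B_def C_def YQ_def[symmetric]
        by (simp add: ev YQv YPv vals)
      then show False using alloc[OF fC, of b2] h c1 disj[OF fC] gg(1)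
        by (auto simp: ev YPv vals ne)
    qed
    have wA: "(welfare S XP A \<le> 5 \<or> (A b1 = {g1} \<and> A b2 = {g2})) \<and> 0 \<le> welfare S XP A \<and> welfare S XP A \<le> 9"
    proof -
      have d: "A b1 \<inter> A b2 = {}" by (rule disj[OF fA])
      show ?thesis
        using alloc[OF fA, of b1]
      proof (elim disjE)
        assume a: "A b1 = {}"
        show ?thesis using alloc[OF fA, of b2] unfolding wel a
          by (elim disjE) (simp_all add: ev XPv vals)
      next
        assume a: "A b1 = {g1}"
        show ?thesis using alloc[OF fA, of b2] d unfolding wel a
          by (elim disjE) (simp_all add: ev XPv vals ne)
      next
        assume a: "A b1 = {g2}"
        show ?thesis using alloc[OF fA, of b2] d unfolding wel a
          by (elim disjE) (simp_all add: ev XPv vals ne)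
      qed
    qed
    have wB: "(welfare S YQ B \<le> 5 \<or> (B b1 = {g2} \<and> B b2 = {g1})) \<and> 0 \<le> welfare S YQ B \<and> welfare S YQ B \<le> 8"
    proof -
      have d: "B b1 \<inter> B b2 = {}" by (rule disj[OF fB])
      show ?thesis
        using alloc[OF fB, of b1]
      proof (elim disjE)
        assume a: "B b1 = {}"
        show ?thesis using alloc[OF fB, of b2] unfolding wel a
          by (elim disjE) (simp_all add: ev YQv vals)
      next
        assume a: "B b1 = {g1}"
        show ?thesis using alloc[OF fB, of b2] d unfolding wel a
          by (elim disjE) (simp_all add: ev YQv vals ne)
      next
        assume a: "B b1 = {g2}"
        show ?thesis using alloc[OF fB, of b2] d unfolding wel a
          by (elim disjE) (simp_all add: ev YQv vals ne)
      qed
    qed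
    show ?thesis
      unfolding A_def[symmetric] B_def[symmetric]
    proof (intro conjI)
      show "3 * welfare S XP A + 4 * welfare S YQ B \<le> 47"
      proof (cases "A b1 = {g1} \<and> A b2 = {g2}")
        case True
        then have "welfare S YQ B \<le> 5" using wB notopt by blast
        moreover have "welfare S XP A \<le> 9" using wA by blast
        ultimately show ?thesis by linarith
      next
        case False
        then have "welfare S XP A \<le> 5" using wA by blast
        moreover have "welfare S YQ B \<le> 8" using wB by blast
        ultimately show ?thesis by linarith
      qed
    qed (use wA wB in auto)
  qed
  have finS: "finite {welfare S v A | A. feasible S A}" for v
  proof -
    have "{welfare S v A | A. feasible S A} \<subseteq> (\<lambda>A. welfare S v A) ` UNIV" by blast
    moreover have "finite ((\<lambda>A. welfare S v A) ` (UNIV :: ('b \<Rightarrow> 'g set) set))" by simp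
    ultimately show ?thesis by (rule finite_subset)
  qed
  define A0 :: "'b \<Rightarrow> 'g set" where "A0 = (\<lambda>i. if i = b1 then {g1} else {g2})"
  define A1 :: "'b \<Rightarrow> 'g set" where "A1 = (\<lambda>i. if i = b1 then {g2} else {g1})"
  have bcase: "\<And>i. i = b1 \<or> i = b2" using bb(2) by blast
  have fA0: "feasible S A0" unfolding feasible_def
  proof (intro conjI allI impI)
    fix i show "A0 i \<in> S i \<union> {{}}" unfolding A0_def S_def by simp
  next
    fix i j :: 'b assume "i \<noteq> j"
    then show "A0 i \<inter> A0 j = {}"
      using bcase[of i] bcase[of j] gg(1) unfolding A0_def by auto
  qed
  have fA1: "feasible S A1" unfolding feasible_def
  proof (intro conjI allI impI)
    fix i show "A1 i \<in> S i \<union> {{}}" unfolding A1_def S_def by simp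
  next
    fix i j :: 'b assume "i \<noteq> j"
    then show "A1 i \<inter> A1 j = {}"
      using bcase[of i] bcase[of j] gg(1) unfolding A1_def by auto
  qed
  have opt1: "opt S XP \<ge> 9"
  proof -
    have "welfare S XP A0 \<in> {welfare S XP A | A. feasible S A}" using fA0 by blast
    then have "welfare S XP A0 \<le> opt S XP" unfolding opt_def
      by (rule Max_ge[OF finS])
    moreover have "A0 b1 = {g1}" "A0 b2 = {g2}" unfolding A0_def using bb(1) by auto
    then have "welfare S XP A0 = 9" unfolding wel
      by (simp add: ev XPv vals)
    ultimately show ?thesis by simp
  qed
  have opt2: "opt S YQ \<ge> 8"
  proof -
    have "welfare S YQ A1 \<in> {welfare S YQ A | A. feasible S A}" using fA1 by blast
    then have "welfare S YQ A1 \<le> opt S YQ" unfolding opt_def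
      by (rule Max_ge[OF finS])
    moreover have "A1 b1 = {g2}" "A1 b2 = {g1}" unfolding A1_def using bb(1) by auto
    then have "welfare S YQ A1 = 8" unfolding wel
      by (simp add: ev YQv vals)
    ultimately show ?thesis by simp
  qed
  interpret prob_space P by (rule assms(3))
  define f1 where "f1 = (\<lambda>M::('b,'g) mech. welfare S XP (M S XP))"
  define f2 where "f2 = (\<lambda>M::('b,'g) mech. welfare S YQ (M S YQ))"
  have m1: "f1 \<in> borel_measurable P" using assms(5) vc vdXP unfolding f1_def by auto
  have m2: "f2 \<in> borel_measurable P" using assms(5) vc vdYQ unfolding f2_def by auto
  have i1: "integrable P f1"
    by (rule integrable_const_bound[where B=10]) (use key m1 in \<open>auto simp: f1_def\<close>)
  have i2: "integrable P f2"
    by (rule integrable_const_bound[where B=10]) (use key m2 in \<open>auto simp: f2_def\<close>)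
  have h1: "opt S XP / \<alpha> \<le> integral\<^sup>L P f1" using assms(7) vc vdXP unfolding f1_def by auto
  have h2: "opt S YQ / \<alpha> \<le> integral\<^sup>L P f2" using assms(7) vc vdYQ unfolding f2_def by auto
  have "(\<integral>M. 3 * f1 M + 4 * f2 M \<partial>P) \<le> 47"
    by (rule integral_le_const) (use i1 i2 key in \<open>auto simp: f1_def f2_def\<close>)
  moreover have "(\<integral>M. 3 * f1 M + 4 * f2 M \<partial>P) = 3 * integral\<^sup>L P f1 + 4 * integral\<^sup>L P f2"
    using i1 i2 by simp
  ultimately have "3 * (opt S XP / \<alpha>) + 4 * (opt S YQ / \<alpha>) \<le> 47" using h1 h2 by linarith
  then have "(3 * opt S XP + 4 * opt S YQ) / \<alpha> \<le> 47" by (simp add: add_divide_distrib)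
  then have "3 * opt S XP + 4 * opt S YQ \<le> 47 * \<alpha>" using assms(6) by (simp add: divide_le_eq)
  then have "59 \<le> 47 * \<alpha>" using opt1 opt2 by linarith
  then show ?thesis by linarith
qed

end
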